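(* Let $(R,\mathfrak{m})$ be a commutative Noetherian local ring of prime characteristic $p$, and suppose there is a left $R[x,f]$-module $E$ which, as an $R$-module, is isomorphic to $E_R(R/\mathfrak{m})$. Let $\widetilde{E}=\bigoplus_{n\in\mathbb{N}_0}E_n$ with each $E_n=E$, the graded left $R[x,f]$-module in which $x$ maps $e\in E_n$ to $xe\in E_{n+1}$. Let $M$ be a non-zero $R$-module of finite length whose zero submodule is irreducible (i.e. is not the intersection of two non-zero submodules). Then there exists a homogeneous $R[x,f]$-homomorphism $\lambda=\bigoplus_{i\in\mathbb{N}_0}\lambda_i:R[x,f]\otimes_RM=\bigoplus_{i\in\mathbb{N}_0}(Rx^i\otimes_RM)\to\widetilde{E}$ such that $\lambda_0$ is a monomorphism.
   Context: $R[x,f]$ denotes the Frobenius skew polynomial ring over $R$: as a left $R$-module it is free on $(x^i)_{i\in\mathbb{N}_0}$, with multiplication subject to $xr = r^px$; it is graded with $n$th component $Rx^n$, viewed as an $(R,R)$-bimodule (so $rx^i\cdot s=rs^{p^i}x^i$), and $R[x,f]\otimes_RM=\bigoplus_i(Rx^i\otimes_RM)$ is a graded left $R[x,f]$-module. $\lambda_i$ denotes the restriction of $\lambda$ to the degree-$i$ component. *)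

theory Defs
  imports Main HOL.Modules "HOL-Library.Poly_Mapping" "HOL-Computational_Algebra.Primes"
begin

definition is_ideal :: "'a::comm_ring_1 set \<Rightarrow> bool" where
  "is_ideal I \<longleftrightarrow> module.subspace ((*) :: 'a \<Rightarrow> 'a \<Rightarrow> 'a) I"

definition noetherian_ring :: "'a::comm_ring_1 itself \<Rightarrow> bool" where
  "noetherian_ring _ \<longleftrightarrow>
     (\<forall>I::'a set. is_ideal I \<longrightarrow> (\<exists>S. finite S \<and> I = module.span (*) S))"

definition maximal_ideal :: "'a::comm_ring_1 set \<Rightarrow> bool" where
  "maximal_ideal m \<longleftrightarrow> is_ideal m \<and> m \<noteq> UNIV \<and>
     (\<forall>J. is_ideal J \<longrightarrow> m \<subseteq> J \<longrightarrow> J = m \<or> J = UNIV)"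

definition local_ring :: "'a::comm_ring_1 set \<Rightarrow> bool" where
  "local_ring m \<longleftrightarrow> maximal_ideal m \<and> (\<forall>n. maximal_ideal n \<longrightarrow> n = m)"

definition has_prime_char :: "'a::comm_ring_1 itself \<Rightarrow> nat \<Rightarrow> bool" where
  "has_prime_char _ p \<longleftrightarrow> prime p \<and> of_nat p = (0::'a)"

definition annihilator :: "('a::comm_ring_1 \<Rightarrow> 'b::ab_group_add \<Rightarrow> 'b) \<Rightarrow> 'b \<Rightarrow> 'a set" where
  "annihilator s e = {r. s r e = 0}"

text \<open>Injectivity of an R-module, via Baer's criterion: every R-linear map from an
  ideal of R into E extends to an R-linear map R \<rightarrow> E.\<close>
definition injective_module :: "('a::comm_ring_1 \<Rightarrow> 'b::ab_group_add \<Rightarrow> 'b) \<Rightarrow> bool" where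
  "injective_module s \<longleftrightarrow>
     (\<forall>I h. is_ideal I \<longrightarrow>
        (\<forall>a\<in>I. \<forall>b\<in>I. h (a + b) = h a + h b) \<longrightarrow>
        (\<forall>r. \<forall>a\<in>I. h (r * a) = s r (h a)) \<longrightarrow>
        (\<exists>g. (\<forall>a b. g (a + b) = g a + g b) \<and> (\<forall>r a. g (r * a) = s r (g a)) \<and>
             (\<forall>a\<in>I. g a = h a)))"

text \<open>E is (isomorphic to) the injective hull E_R(R/m): E is injective and is an essential
  extension of a submodule R e isomorphic to R/m (i.e. cyclic with annihilator m).\<close>
definition injective_hull_residue_field ::
    "('a::comm_ring_1 \<Rightarrow> 'b::ab_group_add \<Rightarrow> 'b) \<Rightarrow> 'a set \<Rightarrow> bool" where
  "injective_hull_residue_field s m \<longleftrightarrow>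
     module s \<and> injective_module s \<and>
     (\<exists>e. annihilator s e = m \<and>
        (\<forall>N. module.subspace s N \<longrightarrow> N \<noteq> {0} \<longrightarrow>
             (\<exists>y\<in>N. y \<noteq> 0 \<and> y \<in> module.span s {e})))"

text \<open>A left R[x,f]-module: an R-module together with the action of x, which is additive and
  satisfies x (r e) = r^p (x e) (the defining relation x r = r^p x of R[x,f]).\<close>
definition Rxf_module ::
    "nat \<Rightarrow> ('a::comm_ring_1 \<Rightarrow> 'b::ab_group_add \<Rightarrow> 'b) \<Rightarrow> ('b \<Rightarrow> 'b) \<Rightarrow> bool" where
  "Rxf_module p s xa \<longleftrightarrow> module s \<and>
     (\<forall>a b. xa (a + b) = xa a + xa b) \<and> (\<forall>r a. xa (s r a) = s (r ^ p) (xa a))"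

definition finite_length :: "('a::comm_ring_1 \<Rightarrow> 'b::ab_group_add \<Rightarrow> 'b) \<Rightarrow> bool" where
  "finite_length s \<longleftrightarrow>
     (\<exists>n N. N 0 = {0} \<and> N n = UNIV \<and> (\<forall>j\<le>n. module.subspace s (N j)) \<and>
        (\<forall>j<n. N j \<subset> N (Suc j) \<and>
           \<not> (\<exists>L. module.subspace s L \<and> N j \<subset> L \<and> L \<subset> N (Suc j))))"

definition zero_submodule_irreducible :: "('a::comm_ring_1 \<Rightarrow> 'b::ab_group_add \<Rightarrow> 'b) \<Rightarrow> bool" where
  "zero_submodule_irreducible s \<longleftrightarrow>
     \<not> (\<exists>A B. module.subspace s A \<and> module.subspace s B \<and> A \<noteq> {0} \<and> B \<noteq> {0} \<and>
            A \<inter> B = {0})"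

text \<open>Free abelian group on R \<times> M: finitely supported functions (R x M) =>0 int.
  The relations for Rx^i \<otimes>_R M, where the right R-action on Rx^i is a \<cdot> s = a s^(p^i).\<close>

abbreviation gen :: "'a \<Rightarrow> 'm \<Rightarrow> ('a \<times> 'm) \<Rightarrow>\<^sub>0 int" where
  "gen a y \<equiv> Poly_Mapping.single (a, y) 1"

inductive_set tens_rel ::
    "nat \<Rightarrow> ('a::comm_ring_1 \<Rightarrow> 'm::ab_group_add \<Rightarrow> 'm) \<Rightarrow> nat \<Rightarrow> (('a \<times> 'm) \<Rightarrow>\<^sub>0 int) set"
  for p s i where
    rel_add_left: "gen (a + b) y - gen a y - gen b y \<in> tens_rel p s i"
  | rel_add_right: "gen a (y + z) - gen a y - gen a z \<in> tens_rel p s i"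
  | rel_balanced: "gen (a * c ^ (p ^ i)) y - gen a (s c y) \<in> tens_rel p s i"
  | rel_zero: "0 \<in> tens_rel p s i"
  | rel_plus: "g \<in> tens_rel p s i \<Longrightarrow> h \<in> tens_rel p s i \<Longrightarrow> g + h \<in> tens_rel p s i"
  | rel_uminus: "g \<in> tens_rel p s i \<Longrightarrow> - g \<in> tens_rel p s i"

definition tcls :: "nat \<Rightarrow> ('a::comm_ring_1 \<Rightarrow> 'm::ab_group_add \<Rightarrow> 'm) \<Rightarrow> nat \<Rightarrow>
    (('a \<times> 'm) \<Rightarrow>\<^sub>0 int) \<Rightarrow> (('a \<times> 'm) \<Rightarrow>\<^sub>0 int) set" where
  "tcls p s i g = {h. h - g \<in> tens_rel p s i}"

definition free_smul :: "'a::comm_ring_1 \<Rightarrow> (('a \<times> 'm) \<Rightarrow>\<^sub>0 int) \<Rightarrow> (('a \<times> 'm) \<Rightarrow>\<^sub>0 int)" where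
  "free_smul r g = (\<Sum>z\<in>Poly_Mapping.keys g. Poly_Mapping.single (r * fst z, snd z) (Poly_Mapping.lookup g z))"

text \<open>Action of x on representatives: x \<cdot> (a x^i \<otimes> y) = a^p x^(i+1) \<otimes> y.\<close>
definition free_x :: "nat \<Rightarrow> (('a::comm_ring_1 \<times> 'm) \<Rightarrow>\<^sub>0 int) \<Rightarrow> (('a \<times> 'm) \<Rightarrow>\<^sub>0 int)" where
  "free_x p g = (\<Sum>z\<in>Poly_Mapping.keys g. Poly_Mapping.single (fst z ^ p, snd z) (Poly_Mapping.lookup g z))"

text \<open>A homogeneous R[x,f]-homomorphism \<lambda> = \<Oplus> \<lambda>_i from R[x,f] \<otimes>_R M = \<Oplus> (Rx^i \<otimes>_R M)
  to the graded module \<Oplus>_n E_n (E_n = E, x : E_n \<rightarrow> E_(n+1), e \<mapsto> x e).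
  lam i is the degree-i component, defined on the classes tcls p sM i g.\<close>
definition homog_Rxf_hom ::
    "nat \<Rightarrow> ('a::comm_ring_1 \<Rightarrow> 'm::ab_group_add \<Rightarrow> 'm) \<Rightarrow> ('a \<Rightarrow> 'e::ab_group_add \<Rightarrow> 'e) \<Rightarrow>
     ('e \<Rightarrow> 'e) \<Rightarrow> (nat \<Rightarrow> (('a \<times> 'm) \<Rightarrow>\<^sub>0 int) set \<Rightarrow> 'e) \<Rightarrow> bool" where
  "homog_Rxf_hom p sM sE xE lam \<longleftrightarrow>
     (\<forall>i g h. lam i (tcls p sM i (g + h)) = lam i (tcls p sM i g) + lam i (tcls p sM i h)) \<and>
     (\<forall>i r g. lam i (tcls p sM i (free_smul r g)) = sE r (lam i (tcls p sM i g))) \<and>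
     (\<forall>i g. lam (Suc i) (tcls p sM (Suc i) (free_x p g)) = xE (lam i (tcls p sM i g)))"

end

theory Submission
  imports Defs
begin


definition lin_on :: "('a::comm_ring_1 \<Rightarrow> 'm::ab_group_add \<Rightarrow> 'm) \<Rightarrow> ('a \<Rightarrow> 'e::ab_group_add \<Rightarrow> 'e) \<Rightarrow> 'm set \<Rightarrow> ('m \<Rightarrow> 'e) \<Rightarrow> bool" where
  "lin_on s t D f \<longleftrightarrow> (\<forall>a\<in>D. \<forall>b\<in>D. f (a+b) = f a + f b) \<and> (\<forall>r. \<forall>a\<in>D. f (s r a) = t r (f a))"

lemma module_mult: "module ((*) :: 'a::comm_ring_1 \<Rightarrow> 'a \<Rightarrow> 'a)"
  by standard (auto simp: algebra_simps)

lemma subspace_line: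
  assumes mM: "module sM" and D: "module.subspace sM D"
  shows "module.subspace sM {a + sM r y |a r. a \<in> D}"
proof -
  interpret M: module sM by fact
  show ?thesis
  proof (rule M.subspaceI)
    have "0 = 0 + sM 0 y" by simp
    then show "0 \<in> {a + sM r y |a r. a \<in> D}"
      using M.subspace_0[OF D] by blast
    show "x + z \<in> {a + sM r y |a r. a \<in> D}" if xin: "x \<in> {a + sM r y |a r. a \<in> D}" and zin: "z \<in> {a + sM r y |a r. a \<in> D}" for x z
    proof -
      obtain a r b t where ab: "a \<in> D" "b \<in> D" "x = a + sM r y" "z = b + sM t y" using xin zin by blast
      then have "x + z = (a + b) + sM (r + t) y" by (simp add: M.scale_left_distrib algebra_simps)
      then show ?thesis using M.subspace_add[OF D ab(1,2)] by blast
    qed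
    show "sM c x \<in> {a + sM r y |a r. a \<in> D}" if xin: "x \<in> {a + sM r y |a r. a \<in> D}" for c x
    proof -
      obtain a r where ab: "a \<in> D" "x = a + sM r y" using xin by blast
      then have "sM c x = sM c a + sM (c * r) y" by (simp add: M.scale_right_distrib)
      then show ?thesis using M.subspace_scale[OF D ab(1)] by blast
    qed
  qed
qed

lemma subspace_ideal_mult:
  assumes mM: "module sM" and J: "is_ideal J"
  shows "module.subspace sM {sM j y | j. j \<in> J}"
proof -
  interpret M: module sM by fact
  have Jsub: "module.subspace (*) J" using J unfolding is_ideal_def by simp
  show ?thesis
  proof (rule M.subspaceI)
    have "0 = sM 0 y" by simp
    then show "0 \<in> {sM j y | j. j \<in> J}" using module.subspace_0[OF module_mult Jsub] by blast
    show "x + z \<in> {sM j y | j. j \<in> J}" if xin: "x \<in> {sM j y | j. j \<in> J}" and zin: "z \<in> {sM j y | j. j \<in> J}" for x z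
    proof -
      obtain a b where ab: "a \<in> J" "b \<in> J" "x = sM a y" "z = sM b y" using xin zin by blast
      then have "x + z = sM (a + b) y" by (simp add: M.scale_left_distrib)
      then show ?thesis using module.subspace_add[OF module_mult Jsub ab(1,2)] by blast
    qed
    show "sM c x \<in> {sM j y | j. j \<in> J}" if xin: "x \<in> {sM j y | j. j \<in> J}" for c x
    proof -
      obtain a where ab: "a \<in> J" "x = sM a y" using xin by blast
      then have "sM c x = sM (c * a) y" by simp
      then show ?thesis using module.subspace_scale[OF module_mult Jsub ab(1)] by blast
    qed
  qed
qed

lemma ideal_UNIV: "is_ideal (UNIV :: 'a::comm_ring_1 set)"
  unfolding is_ideal_def by (rule module.subspace_UNIV[OF module_mult])

lemma extend_step:
  fixes sM :: "'a::comm_ring_1 \<Rightarrow> 'm::ab_group_add \<Rightarrow> 'm" and sE :: "'a \<Rightarrow> 'e::ab_group_add \<Rightarrow> 'e"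
  assumes mM: "module sM" and mE: "module sE" and inj: "injective_module sE"
    and D: "module.subspace sM D" and f: "lin_on sM sE D f"
  shows "\<exists>f'. module.subspace sM {a + sM r y |a r. a \<in> D} \<and> lin_on sM sE {a + sM r y |a r. a \<in> D} f'
     \<and> (\<forall>a\<in>D. f' a = f a)"
proof -
  interpret M: module sM by fact
  interpret E: module sE by fact
  have fadd: "f (a+b) = f a + f b" if "a \<in> D" "b \<in> D" for a b using f that unfolding lin_on_def by blast
  have fsc: "f (sM r a) = sE r (f a)" if "a \<in> D" for r a using f that unfolding lin_on_def by blast
  have fdiff: "f (a - b) = f a - f b" if "a \<in> D" "b \<in> D" for a b
  proof -
    have "a - b \<in> D" using M.subspace_diff[OF D] that by blast
    then have "f a = f (a - b) + f b" using fadd[of "a-b" b] that by simp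
    then show ?thesis by simp
  qed
  define I where "I = {r. sM r y \<in> D}"
  have I: "is_ideal I" unfolding is_ideal_def I_def
    apply (rule module.subspaceI)
       apply (rule module_mult)
    using M.subspace_0[OF D] M.subspace_add[OF D] M.subspace_scale[OF D]
    by (auto simp: M.scale_left_distrib simp del: M.scale_scale simp add: M.scale_scale[symmetric])
  define h where "h r = f (sM r y)" for r
  obtain g where gadd: "\<And>a b. g (a + b) = g a + g b" and gsc: "\<And>r a. g (r * a) = sE r (g a)"
    and gh: "\<And>a. a \<in> I \<Longrightarrow> g a = h a"
  proof -
    have h1: "\<forall>a\<in>I. \<forall>b\<in>I. h (a + b) = h a + h b"
      unfolding h_def I_def by (auto simp: M.scale_left_distrib fadd)
    have h2: "\<forall>r. \<forall>a\<in>I. h (r * a) = sE r (h a)"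
      unfolding h_def I_def by (auto simp del: M.scale_scale simp add: M.scale_scale[symmetric] simp: fsc)
    have "\<exists>g. (\<forall>a b. g (a + b) = g a + g b) \<and> (\<forall>r a. g (r * a) = sE r (g a)) \<and> (\<forall>a\<in>I. g a = h a)"
      using inj[unfolded injective_module_def, rule_format, OF I h1[rule_format] h2[rule_format]] .
    then obtain g where "(\<forall>a b. g (a + b) = g a + g b)" "(\<forall>r a. g (r * a) = sE r (g a))" "(\<forall>a\<in>I. g a = h a)"
      by (elim exE conjE)
    then show ?thesis using that by blast
  qed
  have g0: "g 0 = 0" using gadd[of 0 0] by simp
  have gdiff: "g (a - b) = g a - g b" for a b using gadd[of "a-b" b] by (simp add: algebra_simps)
  have key: "f n + g r = f n' + g r'" if "n \<in> D" "n' \<in> D" "n + sM r y = n' + sM r' y" for n n' r r'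
  proof -
    have "sM (r - r') y = n' - n" using that(3) by (simp add: M.scale_left_diff_distrib algebra_simps)
    then have "r - r' \<in> I" unfolding I_def using M.subspace_diff[OF D that(2,1)] by simp
    then have "g (r - r') = f (n' - n)" using gh unfolding h_def
      using \<open>sM (r - r') y = n' - n\<close> by simp
    then show ?thesis using gdiff fdiff that(1,2) by (simp add: algebra_simps)
  qed
  define D' where "D' = {a + sM r y |a r. a \<in> D}"
  define f' where "f' z = (let c = (SOME c. fst c \<in> D \<and> z = fst c + sM (snd c) y) in f (fst c) + g (snd c))" for z
  have f'eq: "f' (n + sM r y) = f n + g r" if "n \<in> D" for n r
  proof -
    let ?c = "SOME c. fst c \<in> D \<and> n + sM r y = fst c + sM (snd c) y"
    have c: "fst ?c \<in> D \<and> n + sM r y = fst ?c + sM (snd ?c) y"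
      by (rule someI[of _ "(n, r)"]) (use that in simp)
    have "f' (n + sM r y) = f (fst ?c) + g (snd ?c)" unfolding f'_def Let_def by simp
    also have "\<dots> = f n + g r" using key[of "fst ?c" n "snd ?c" r] c that by simp
    finally show ?thesis .
  qed
  have sD': "M.subspace D'" unfolding D'_def by (rule subspace_line[OF mM D])
  have lin: "lin_on sM sE D' f'" unfolding lin_on_def
  proof (intro conjI ballI allI)
    fix x z assume "x \<in> D'" "z \<in> D'"
    then obtain a r b s where ab: "a \<in> D" "b \<in> D" "x = a + sM r y" "z = b + sM s y" unfolding D'_def by blast
    then have "x + z = (a + b) + sM (r + s) y" by (simp add: M.scale_left_distrib algebra_simps)
    then have "f' (x + z) = f (a + b) + g (r + s)" using f'eq M.subspace_add[OF D ab(1,2)] by simp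
    also have "\<dots> = (f a + g r) + (f b + g s)" using fadd[OF ab(1,2)] gadd by (simp add: algebra_simps)
    also have "\<dots> = f' x + f' z" using f'eq ab by simp
    finally show "f' (x + z) = f' x + f' z" .
  next
    fix c x assume "x \<in> D'"
    then obtain a r where ab: "a \<in> D" "x = a + sM r y" unfolding D'_def by blast
    then have "sM c x = sM c a + sM (c * r) y" by (simp add: M.scale_right_distrib)
    then have "f' (sM c x) = f (sM c a) + g (c * r)" using f'eq M.subspace_scale[OF D ab(1)] by simp
    also have "\<dots> = sE c (f a + g r)" using fsc[OF ab(1)] gsc by (simp add: E.scale_right_distrib)
    also have "\<dots> = sE c (f' x)" using f'eq ab by simp
    finally show "f' (sM c x) = sE c (f' x)" .
  qed
  have "\<forall>a\<in>D. f' a = f a" using f'eq[of _ 0] g0 by simp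
  then show ?thesis using sD' lin unfolding D'_def by (intro exI[of _ f']) simp
qed


lemma embedding:
  fixes m :: "'a::comm_ring_1 set"
    and sE :: "'a \<Rightarrow> 'e::ab_group_add \<Rightarrow> 'e"
    and sM :: "'a \<Rightarrow> 'm::ab_group_add \<Rightarrow> 'm"
  assumes loc: "local_ring m"
    and hull: "injective_hull_residue_field sE m"
    and mM: "module sM"
    and nz: "\<exists>y::'m. y \<noteq> 0"
    and fl: "finite_length sM"
    and irr: "zero_submodule_irreducible sM"
  shows "\<exists>\<iota>. lin_on sM sE UNIV \<iota> \<and> inj \<iota>"
proof -
  interpret M: module sM by fact
  have H0: "module sE \<and> injective_module sE \<and>
     (\<exists>e. annihilator sE e = m \<and>
        (\<forall>N. module.subspace sE N \<longrightarrow> N \<noteq> {0} \<longrightarrow>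
             (\<exists>y\<in>N. y \<noteq> 0 \<and> y \<in> module.span sE {e})))"
    using hull unfolding injective_hull_residue_field_def .
  have mE: "module sE" using H0 by (rule conjunct1)
  have inj: "injective_module sE" using H0 by (elim conjE)
  obtain e where e: "annihilator sE e = m" using H0 by (elim conjE exE) (erule that)
  interpret E: module sE by fact
  obtain n N where Nall: "N 0 = {0} \<and> N n = UNIV \<and> (\<forall>j\<le>n. M.subspace (N j)) \<and>
        (\<forall>j<n. N j \<subset> N (Suc j) \<and>
           \<not> (\<exists>L. M.subspace L \<and> N j \<subset> L \<and> L \<subset> N (Suc j)))"
    using fl unfolding finite_length_def by (elim exE) (erule that)
  have N0: "N 0 = {0}" using Nall by (elim conjE)
  have Nn: "N n = UNIV" using Nall by (elim conjE)
  have Nsub: "\<forall>j\<le>n. M.subspace (N j)" using Nall by (elim conjE)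
  have Nstep: "\<forall>j<n. N j \<subset> N (Suc j) \<and> \<not> (\<exists>L. M.subspace L \<and> N j \<subset> L \<and> L \<subset> N (Suc j))"
    using Nall by (elim conjE)
  have "n \<noteq> 0"
  proof
    assume "n = 0"
    then have "(UNIV::'m set) = {0}" using N0 Nn by simp
    then show False using nz by (metis UNIV_I singletonD)
  qed
  then have N1: "{0} \<subset> N 1" "M.subspace (N 1)" "\<not> (\<exists>L. M.subspace L \<and> {0} \<subset> L \<and> L \<subset> N 1)"
  proof -
    have "0 < n" using \<open>n \<noteq> 0\<close> by simp
    have c: "N 0 \<subset> N (Suc 0) \<and> \<not> (\<exists>L. M.subspace L \<and> N 0 \<subset> L \<and> L \<subset> N (Suc 0))"
      using Nstep[rule_format, OF \<open>0 < n\<close>] .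
    have a: "N 0 \<subset> N (Suc 0)" using c by (elim conjE)
    have b: "\<not> (\<exists>L. M.subspace L \<and> N 0 \<subset> L \<and> L \<subset> N (Suc 0))" using c by (elim conjE)
    show "M.subspace (N 1)" using Nsub[rule_format, of 1] \<open>0 < n\<close> by simp
    show "{0} \<subset> N 1" using a N0 by simp
    show "\<not> (\<exists>L. M.subspace L \<and> {0} \<subset> L \<and> L \<subset> N 1)" using b N0 by (metis One_nat_def)
  qed
  obtain y0 where y0: "y0 \<in> N 1" "y0 \<noteq> 0" using N1(1) by blast
  define A where "A = annihilator sM y0"
  have Aideal: "is_ideal A" unfolding is_ideal_def A_def annihilator_def
    apply (rule module.subspaceI)
       apply (rule module_mult)
    by (auto simp: M.scale_left_distrib simp del: M.scale_scale simp add: M.scale_scale[symmetric])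
  have Amax: "maximal_ideal A" unfolding maximal_ideal_def
  proof (intro conjI allI impI)
    show "A \<noteq> UNIV" using y0 unfolding A_def annihilator_def by (metis M.scale_one UNIV_I mem_Collect_eq)
  next
    fix J assume J: "is_ideal J" "A \<subseteq> J"
    have Jsub: "module.subspace (*) J" using J unfolding is_ideal_def by simp
    define JS where "JS = {sM j y0 | j. j \<in> J}"
    have sJS: "M.subspace JS" unfolding JS_def by (rule subspace_ideal_mult[OF mM J(1)])
    have JS1: "JS \<subseteq> N 1" unfolding JS_def using M.subspace_scale[OF N1(2) y0(1)] by auto
    show "J = A \<or> J = UNIV"
    proof (cases "JS = {0}")
      case True
      then have "J \<subseteq> A" unfolding JS_def A_def annihilator_def by auto
      then show ?thesis using J by auto
    next
      case False
      have "0 \<in> JS" using M.subspace_0[OF sJS] .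
      then have "JS = N 1" using N1(3) sJS False JS1 by blast
      then obtain j where j: "j \<in> J" "y0 = sM j y0" using y0 unfolding JS_def by auto
      then have "sM (1 - j) y0 = 0" by (simp add: M.scale_left_diff_distrib)
      then have "1 - j \<in> J" using J(2) unfolding A_def annihilator_def by auto
      then have "1 \<in> J" using module.subspace_add[OF module_mult Jsub j(1)] by force
      then have "r \<in> J" for r using module.subspace_scale[OF module_mult Jsub, of 1 r] by simp
      then show ?thesis by auto
    qed
  qed (rule Aideal)
  have Am: "A = m" using loc Amax unfolding local_ring_def by auto
  define S where "S = {sM r y0 | r. True}"
  have SS: "S = {sM j y0 | j. j \<in> UNIV}" unfolding S_def by simp
  have sS: "M.subspace S" unfolding SS by (rule subspace_ideal_mult[OF mM ideal_UNIV])
  have "y0 = sM 1 y0" by simp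
  then have "y0 \<in> S" unfolding S_def by blast
  then have Snz: "S \<noteq> {0}" using y0(2) by blast
  have wd: "sE r e = sE r' e" if "sM r y0 = sM r' y0" for r r'
  proof -
    have "sM (r - r') y0 = 0" using that by (simp add: M.scale_left_diff_distrib)
    then have "r - r' \<in> m" using Am unfolding A_def annihilator_def by auto
    then have "sE (r - r') e = 0" using e unfolding annihilator_def by auto
    then show ?thesis by (simp add: E.scale_left_diff_distrib)
  qed
  define f0 where "f0 z = sE (SOME r. z = sM r y0) e" for z
  have f0eq: "f0 (sM r y0) = sE r e" for r
  proof -
    have "sM r y0 = sM (SOME r'. sM r y0 = sM r' y0) y0" by (rule someI[of _ r]) simp
    then show ?thesis unfolding f0_def using wd by metis
  qed
  have f0lin: "lin_on sM sE S f0" unfolding lin_on_def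
  proof (intro conjI ballI allI)
    fix a b assume "a \<in> S" "b \<in> S"
    then obtain r s where "a = sM r y0" "b = sM s y0" unfolding S_def by blast
    then show "f0 (a + b) = f0 a + f0 b"
      by (simp add: f0eq flip: M.scale_left_distrib add: E.scale_left_distrib)
  next
    fix c a assume "a \<in> S"
    then obtain r where "a = sM r y0" unfolding S_def by blast
    then show "f0 (sM c a) = sE c (f0 a)" by (simp add: f0eq)
  qed
  have f0inj: "a = 0" if aS: "a \<in> S" and fa: "f0 a = 0" for a
  proof -
    obtain r where r: "a = sM r y0" using aS unfolding S_def by auto
    then have "r \<in> m" using fa f0eq e unfolding annihilator_def by auto
    then show ?thesis using r Am unfolding A_def annihilator_def by auto
  qed
  have ind: "j \<le> n \<Longrightarrow> \<exists>D f. M.subspace D \<and> N j \<subseteq> D \<and> S \<subseteq> D \<and> lin_on sM sE D f \<and> (\<forall>a\<in>S. f a = f0 a)" for j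
  proof (induction j)
    case 0
    have "N 0 \<subseteq> S" using N0 M.subspace_0[OF sS] by simp
    then show ?case using sS f0lin by (intro exI[of _ S] exI[of _ f0]) simp
  next
    case (Suc j)
    then obtain D f where D: "M.subspace D" "N j \<subseteq> D" "S \<subseteq> D" "lin_on sM sE D f" "\<forall>a\<in>S. f a = f0 a"
      by (meson Suc_leD)
    show ?case
    proof (cases "N (Suc j) \<subseteq> D")
      case True
      then show ?thesis using D by blast
    next
      case False
      then obtain y where y: "y \<in> N (Suc j)" "y \<notin> D" by blast
      obtain f' where f': "M.subspace {a + sM r y |a r. a \<in> D}" "lin_on sM sE {a + sM r y |a r. a \<in> D} f'"
        "\<forall>a\<in>D. f' a = f a"
        using extend_step[OF mM mE inj D(1) D(4)] by blast
      have DD': "D \<subseteq> {a + sM r y |a r. a \<in> D}"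
      proof
        fix x assume "x \<in> D"
        moreover have "x = x + sM 0 y" by simp
        ultimately show "x \<in> {a + sM r y |a r. a \<in> D}" by blast
      qed
      define L where "L = {a + sM r y |a r. a \<in> N j}"
      have jn: "j < n" using Suc.prems by simp
      have sNj: "M.subspace (N j)" "M.subspace (N (Suc j))" using Nsub jn by simp_all
      have st: "N j \<subset> N (Suc j)" "\<not> (\<exists>L. M.subspace L \<and> N j \<subset> L \<and> L \<subset> N (Suc j))"
        using Nstep jn by blast+
      have sL: "M.subspace L" unfolding L_def by (rule subspace_line[OF mM sNj(1)])
      have NjL: "N j \<subseteq> L"
      proof
        fix x assume "x \<in> N j"
        moreover have "x = x + sM 0 y" by simp
        ultimately show "x \<in> L" unfolding L_def by blast
      qed
      have yL: "y \<in> L"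
      proof -
        have "y = 0 + sM 1 y" by simp
        then show ?thesis unfolding L_def using M.subspace_0[OF sNj(1)] by blast
      qed
      have LN: "L \<subseteq> N (Suc j)"
      proof
        fix x assume "x \<in> L"
        then obtain a r where "a \<in> N j" "x = a + sM r y" unfolding L_def by blast
        moreover have "a \<in> N (Suc j)" using st(1) \<open>a \<in> N j\<close> by blast
        moreover have "sM r y \<in> N (Suc j)" using M.subspace_scale[OF sNj(2) y(1)] .
        ultimately show "x \<in> N (Suc j)" using M.subspace_add[OF sNj(2)] by simp
      qed
      have "y \<notin> N j" using y D(2) by blast
      then have "N j \<subset> L" using NjL yL by blast
      then have "\<not> L \<subset> N (Suc j)" using st(2) sL by blast
      then have "L = N (Suc j)" using LN by blast
      moreover have "L \<subseteq> {a + sM r y |a r. a \<in> D}"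
      proof
        fix x assume "x \<in> L"
        then obtain a r where "a \<in> N j" "x = a + sM r y" unfolding L_def by blast
        moreover have "a \<in> D" using D(2) \<open>a \<in> N j\<close> by blast
        ultimately show "x \<in> {a + sM r y |a r. a \<in> D}" by blast
      qed
      ultimately have "N (Suc j) \<subseteq> {a + sM r y |a r. a \<in> D}" by simp
      moreover have "S \<subseteq> {a + sM r y |a r. a \<in> D}" using D(3) DD' by blast
      moreover have "\<forall>a\<in>S. f' a = f0 a" using D(3,5) f'(3) by auto
      ultimately show ?thesis using f'(1,2)
        by (intro exI[of _ "{a + sM r y |a r. a \<in> D}"] exI[of _ f']) simp
    qed
  qed
  obtain D f where D: "N n \<subseteq> D" "S \<subseteq> D" "lin_on sM sE D f" "\<forall>a\<in>S. f a = f0 a"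
    using ind[of n] by auto
  have DU: "D = UNIV" using D(1) Nn by auto
  have fadd: "f (a + b) = f a + f b" and fsc: "f (sM r a) = sE r (f a)" for a b r
    using D(3) DU unfolding lin_on_def by auto
  have f0': "f 0 = 0" using fadd[of 0 0] by simp
  have fdiff: "f (a - b) = f a - f b" for a b using fadd[of "a - b" b] by (simp add: algebra_simps)
  define K where "K = {a. f a = 0}"
  have sK: "M.subspace K" unfolding K_def
    by (rule M.subspaceI) (auto simp: f0' fadd fsc)
  have "K \<inter> S = {0}" using f0inj D(4) M.subspace_0[OF sS] f0' unfolding K_def by auto
  moreover have "\<not> (M.subspace K \<and> M.subspace S \<and> K \<noteq> {0} \<and> S \<noteq> {0} \<and> K \<inter> S = {0})"
    using irr unfolding zero_submodule_irreducible_def by blast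
  ultimately have "K = {0}" using sK sS Snz by blast
  have "inj f"
  proof (rule injI)
    fix a b assume "f a = f b"
    then have "a - b \<in> K" unfolding K_def using fdiff by simp
    then show "a = b" using \<open>K = {0}\<close> by simp
  qed
  then show ?thesis using D(3) DU by blast
qed



definition phi :: "('a::comm_ring_1 \<Rightarrow> 'e::ab_group_add \<Rightarrow> 'e) \<Rightarrow> ('m \<Rightarrow> 'e) \<Rightarrow> (('a \<times> 'm) \<Rightarrow>\<^sub>0 int) \<Rightarrow> 'e" where
  "phi sE w g = (\<Sum>z\<in>Poly_Mapping.keys g. sE (of_int (Poly_Mapping.lookup g z) * fst z) (w (snd z)))"

lemma phi_superset:
  assumes "module sE" "finite K" "Poly_Mapping.keys g \<subseteq> K"
  shows "phi sE w g = (\<Sum>z\<in>K. sE (of_int (Poly_Mapping.lookup g z) * fst z) (w (snd z)))"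
proof -
  interpret E: module sE by fact
  show ?thesis unfolding phi_def
    by (rule sum.mono_neutral_left) (use assms in \<open>auto simp: in_keys_iff\<close>)
qed

lemma phi_add:
  assumes "module sE"
  shows "phi sE w (g + h) = phi sE w g + phi sE w h"
proof -
  interpret E: module sE by fact
  let ?K = "Poly_Mapping.keys g \<union> Poly_Mapping.keys h"
  have fK: "finite ?K" by simp
  have "phi sE w (g + h) = (\<Sum>z\<in>?K. sE (of_int (Poly_Mapping.lookup (g + h) z) * fst z) (w (snd z)))"
    by (rule phi_superset[OF assms fK]) (rule keys_add)
  also have "\<dots> = (\<Sum>z\<in>?K. sE (of_int (Poly_Mapping.lookup g z) * fst z) (w (snd z))
       + sE (of_int (Poly_Mapping.lookup h z) * fst z) (w (snd z)))"
    by (rule sum.cong) (simp_all add: lookup_add distrib_right E.scale_left_distrib)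
  also have "\<dots> = phi sE w g + phi sE w h"
    by (simp add: sum.distrib phi_superset[OF assms fK])
  finally show ?thesis .
qed

lemma phi_zero: "module sE \<Longrightarrow> phi sE w 0 = 0"
  by (simp add: phi_def)

lemma phi_minus: "module sE \<Longrightarrow> phi sE w (- g) = - phi sE w g"
  using phi_add[of sE w g "-g"] phi_zero[of sE w] by (simp add: eq_neg_iff_add_eq_0 add.commute)

lemma phi_diff: "module sE \<Longrightarrow> phi sE w (g - h) = phi sE w g - phi sE w h"
  using phi_add[of sE w g "-h"] phi_minus[of sE w h] by simp

lemma phi_frag_of: "module sE \<Longrightarrow> phi sE w (frag_of z) = sE (fst z) (w (snd z))"
  by (simp add: phi_def)

lemma frag_cmul_of: "frag_cmul k (frag_of z) = Poly_Mapping.single z k"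
  by (rule poly_mapping_eqI) (simp add: lookup_single)

lemma free_smul_ext: "free_smul r g = frag_extend (\<lambda>z. frag_of (r * fst z, snd z)) g"
  unfolding free_smul_def frag_extend_def by (simp add: frag_cmul_of)

lemma free_x_ext: "free_x p g = frag_extend (\<lambda>z. frag_of (fst z ^ p, snd z)) g"
  unfolding free_x_def frag_extend_def by (simp add: frag_cmul_of)

lemma rel_diff: "g \<in> tens_rel p s i \<Longrightarrow> h \<in> tens_rel p s i \<Longrightarrow> g - h \<in> tens_rel p s i"
  using rel_plus[OF _ rel_uminus] by (metis diff_conv_add_uminus)

lemma tcls_eq: "tcls p s i g = tcls p s i h \<longleftrightarrow> g - h \<in> tens_rel p s i"
proof
  assume "tcls p s i g = tcls p s i h"
  moreover have "g \<in> tcls p s i g" unfolding tcls_def using rel_zero by simp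
  ultimately show "g - h \<in> tens_rel p s i" unfolding tcls_def by blast
next
  assume gh: "g - h \<in> tens_rel p s i"
  show "tcls p s i g = tcls p s i h" unfolding tcls_def
  proof (intro Collect_cong iffI)
    fix x assume "x - g \<in> tens_rel p s i"
    from rel_plus[OF this gh] show "x - h \<in> tens_rel p s i" by simp
  next
    fix x assume "x - h \<in> tens_rel p s i"
    from rel_diff[OF this gh] show "x - g \<in> tens_rel p s i" by simp
  qed
qed

lemma phi_rel:
  assumes mE: "module sE" and wadd: "\<And>a b. w (a + b) = w a + w b"
    and wsc: "\<And>c y. w (s c y) = sE (c ^ (p ^ i)) (w y)"
    and g: "g \<in> tens_rel p s i"
  shows "phi sE w g = 0"
  using g
proof induction
  interpret E: module sE by fact
  case (rel_add_left a b y)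
  then show ?case by (simp add: phi_diff[OF mE] phi_frag_of[OF mE] E.scale_left_distrib)
next
  interpret E: module sE by fact
  case (rel_add_right a y z)
  then show ?case by (simp add: phi_diff[OF mE] phi_frag_of[OF mE] wadd E.scale_right_distrib)
next
  interpret E: module sE by fact
  case (rel_balanced a c y)
  then show ?case by (simp add: phi_diff[OF mE] phi_frag_of[OF mE] wsc)
next
  case rel_zero
  then show ?case by (simp add: phi_zero[OF mE])
next
  case (rel_plus g h)
  then show ?case by (simp add: phi_add[OF mE])
next
  case (rel_uminus g)
  then show ?case by (simp add: phi_minus[OF mE])
qed



theorem lemma3p1:
  fixes m :: "'a::comm_ring_1 set"
    and p :: nat
    and sE :: "'a \<Rightarrow> 'e::ab_group_add \<Rightarrow> 'e"
    and xE :: "'e \<Rightarrow> 'e"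
    and sM :: "'a \<Rightarrow> 'm::ab_group_add \<Rightarrow> 'm"
  assumes "noetherian_ring TYPE('a)"
    and "local_ring m"
    and "has_prime_char TYPE('a) p"
    and "Rxf_module p sE xE"
    and "injective_hull_residue_field sE m"
    and "module sM"
    and "\<exists>y::'m. y \<noteq> 0"
    and "finite_length sM"
    and "zero_submodule_irreducible sM"
  shows "\<exists>lam. homog_Rxf_hom p sM sE xE lam \<and> inj_on (lam 0) (range (tcls p sM 0))"
proof -
  have mE: "module sE" using assms(4) unfolding Rxf_module_def by (elim conjE)
  have mM: "module sM" by fact
  interpret E: module sE by fact
  interpret M: module sM by fact
  have xadd0: "\<forall>a b. xE (a + b) = xE a + xE b" using assms(4) unfolding Rxf_module_def by (elim conjE)
  have xsc0: "\<forall>r a. xE (sE r a) = sE (r ^ p) (xE a)" using assms(4) unfolding Rxf_module_def by (elim conjE)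
  have xadd: "\<And>a b. xE (a + b) = xE a + xE b" using xadd0 by simp
  have xsc: "\<And>r a. xE (sE r a) = sE (r ^ p) (xE a)" using xsc0 by simp
  obtain \<iota> where ilin: "lin_on sM sE UNIV \<iota>" and iinj: "inj \<iota>"
    using embedding[OF assms(2) assms(5) assms(6) assms(7) assms(8) assms(9)] by blast
  have iadd: "\<iota> (a + b) = \<iota> a + \<iota> b" and isc: "\<iota> (sM r a) = sE r (\<iota> a)" for a b r
    using ilin unfolding lin_on_def by simp_all
  have i0: "\<iota> 0 = 0" using iadd[of 0 0] by simp
  have idiff: "\<iota> (a - b) = \<iota> a - \<iota> b" for a b using iadd[of "a - b" b] by (simp add: algebra_simps)
  have x0: "xE 0 = 0" using xadd[of 0 0] by simp
  have xdiff: "xE (a - b) = xE a - xE b" for a b using xadd[of "a - b" b] by (simp add: algebra_simps)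
  define w where "w i y = (xE ^^ i) (\<iota> y)" for i y
  have wSuc: "w (Suc i) y = xE (w i y)" for i y by (simp add: w_def)
  have wadd: "w i (a + b) = w i a + w i b" for i a b
    by (induction i) (simp_all add: w_def iadd xadd)
  have wsc: "w i (sM c y) = sE (c ^ (p ^ i)) (w i y)" for i c y
  proof (induction i)
    case 0
    then show ?case by (simp add: w_def isc)
  next
    case (Suc i)
    have "(c ^ (p ^ i)) ^ p = c ^ (p ^ Suc i)" by (simp add: power_mult[symmetric] mult.commute)
    then show ?case using Suc by (simp add: wSuc xsc)
  qed
  define lam where "lam i C = phi sE (w i) (SOME g. C = tcls p sM i g)" for i C
  have lam_eq: "lam i (tcls p sM i g) = phi sE (w i) g" for i g
  proof -
    let ?g = "SOME g'. tcls p sM i g = tcls p sM i g'"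
    have "tcls p sM i g = tcls p sM i ?g" by (rule someI[of "\<lambda>g'. tcls p sM i g = tcls p sM i g'" g]) (rule refl)
    then have "g - ?g \<in> tens_rel p sM i" by (rule tcls_eq[THEN iffD1])
    then have "phi sE (w i) (g - ?g) = 0" by (rule phi_rel[where w = "w i" and i = i and p = p and s = sM, OF mE wadd[of i] wsc[of i]])
    then show ?thesis by (simp add: lam_def phi_diff[OF mE])
  qed
  have h2: "phi sE (w i) (free_smul r g) = sE r (phi sE (w i) g)" for i r g
    unfolding free_smul_ext using subset_UNIV
  proof (induction g rule: frag_induction)
    case zero
    then show ?case by (simp add: phi_zero[OF mE])
  next
    case (one x)
    then show ?case by (simp add: phi_frag_of[OF mE])
  next
    case (diff a b)
    then show ?case by (simp add: frag_extend_diff phi_diff[OF mE] E.scale_right_diff_distrib)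
  qed
  have h3: "phi sE (w (Suc i)) (free_x p g) = xE (phi sE (w i) g)" for i g
    unfolding free_x_ext using subset_UNIV
  proof (induction g rule: frag_induction)
    case zero
    then show ?case by (simp add: phi_zero[OF mE] x0)
  next
    case (one x)
    then show ?case by (simp add: phi_frag_of[OF mE] wSuc xsc)
  next
    case (diff a b)
    then show ?case by (simp add: frag_extend_diff phi_diff[OF mE] xdiff)
  qed
  have homog: "homog_Rxf_hom p sM sE xE lam"
    unfolding homog_Rxf_hom_def by (simp add: lam_eq phi_add[OF mE] h2 h3)
  have psi: "phi sE (w 0) g = \<iota> (phi sM (\<lambda>y. y) g)" for g
    using subset_UNIV
  proof (induction g rule: frag_induction)
    case zero
    then show ?case by (simp add: phi_zero[OF mE] phi_zero[OF mM] i0)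
  next
    case (one x)
    then show ?case by (simp add: phi_frag_of[OF mE] phi_frag_of[OF mM] w_def isc)
  next
    case (diff a b)
    then show ?case by (simp add: phi_diff[OF mE] phi_diff[OF mM] idiff)
  qed
  have red: "g - frag_of (1, phi sM (\<lambda>y. y) g) \<in> tens_rel p sM 0" for g
    using subset_UNIV
  proof (induction g rule: frag_induction)
    case zero
    have "gen 1 (0 + 0) - gen 1 0 - gen 1 0 \<in> tens_rel p sM 0" by (rule rel_add_right)
    then show ?case by (simp add: phi_zero[OF mM])
  next
    case (one x)
    have "gen (1 * fst x ^ (p ^ 0)) (snd x) - gen 1 (sM (fst x) (snd x)) \<in> tens_rel p sM 0"
      by (rule rel_balanced)
    then show ?case by (simp add: phi_frag_of[OF mM])
  next
    case (diff a b)
    define A where "A = phi sM (\<lambda>y. y) a"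
    define B where "B = phi sM (\<lambda>y. y) b"
    have r: "gen 1 ((A - B) + B) - gen 1 (A - B) - gen 1 B \<in> tens_rel p sM 0" by (rule rel_add_right)
    have ab: "(a - gen 1 A) - (b - gen 1 B) \<in> tens_rel p sM 0"
      using rel_diff[OF diff(1,2)] unfolding A_def B_def .
    have "(a - b) - gen 1 (A - B) = ((a - gen 1 A) - (b - gen 1 B)) + (gen 1 ((A - B) + B) - gen 1 (A - B) - gen 1 B)"
      by (simp add: algebra_simps)
    then have "(a - b) - gen 1 (A - B) \<in> tens_rel p sM 0" using rel_plus[OF ab r] by simp
    then show ?case by (simp add: phi_diff[OF mM] A_def B_def)
  qed
  have "inj_on (lam 0) (range (tcls p sM 0))"
  proof (rule inj_onI)
    fix C1 C2 assume "C1 \<in> range (tcls p sM 0)" "C2 \<in> range (tcls p sM 0)" and eq: "lam 0 C1 = lam 0 C2"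
    then obtain g h where gh: "C1 = tcls p sM 0 g" "C2 = tcls p sM 0 h" by blast
    then have "\<iota> (phi sM (\<lambda>y. y) g) = \<iota> (phi sM (\<lambda>y. y) h)" using eq lam_eq psi by simp
    then have pe: "phi sM (\<lambda>y. y) g = phi sM (\<lambda>y. y) h" using iinj by (simp add: inj_eq)
    have "(g - gen 1 (phi sM (\<lambda>y. y) g)) - (h - gen 1 (phi sM (\<lambda>y. y) h)) \<in> tens_rel p sM 0"
      by (rule rel_diff[OF red red])
    then have "g - h \<in> tens_rel p sM 0" using pe by simp
    then show "C1 = C2" using gh tcls_eq by blast
  qed
  then show ?thesis using homog by blast
qed

end
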